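(* Suppose that for every unit vector $\theta\in\Theta$, the random variable $x_0^\top\theta$ with $x_0\sim\mathcal D_0^X$ has a density bounded above by $\phi_u$. Then for all $\beta,\beta'>0$ and $\theta\in\Theta$, $\mathrm{TV}(\mathcal D_\beta(\theta),\mathcal D_{\beta'}(\theta))\le\phi_u|\beta-\beta'|$; i.e. the atlas is $\epsilon_{\mathrm{TV}}$-smooth with $\epsilon_{\mathrm{TV}}\le\phi_u$.
   Context: Binary strategic classification: $\Theta\subseteq\{\theta\in\mathbb R^{d}:\|\theta\|=1\}$, a threshold $T\in\mathbb R$, classifiers $f_\theta(x)=\mathbf 1\{\theta^\top x\ge T\}$. For budget $\beta>0$, an individual with features $x_0$ responds with $g_\beta(x_0,\theta)=x_0+\theta(T-x_0^\top\theta)$ if $x_0^\top\theta\in[T-\beta,T)$ and $g_\beta(x_0,\theta)=x_0$ otherwise. Given a base distribution $\mathcal D_0$ of $(x_0,y)$ with feature marginal $\mathcal D_0^X$, $(x,y)\sim\mathcal D_\beta(\theta)$ iff $(x_0,y)\sim\mathcal D_0$ and $x=g_\beta(x_0,\theta)$. $\mathrm{TV}(P,Q)=\sup_A|P(A)-Q(A)|$. *)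

theory Defs
  imports "HOL-Probability.Probability"
begin

text \<open>Best response of an individual with features x0 to classifier theta,
  threshold T and manipulation budget beta.\<close>
definition g_resp :: "real \<Rightarrow> real \<Rightarrow> 'a::euclidean_space \<Rightarrow> 'a \<Rightarrow> 'a" where
  "g_resp T \<beta> x0 \<theta> =
     (if x0 \<bullet> \<theta> \<in> {T - \<beta> ..< T} then x0 + (T - x0 \<bullet> \<theta>) *\<^sub>R \<theta> else x0)"

abbreviation data_space :: "('a::euclidean_space \<times> bool) measure" where
  "data_space \<equiv> borel \<Otimes>\<^sub>M count_space UNIV"

definition D_induced :: "real \<Rightarrow> real \<Rightarrow> ('a::euclidean_space \<times> bool) measure \<Rightarrow> 'a
      \<Rightarrow> ('a \<times> bool) measure" where
  "D_induced T \<beta> D0 \<theta> = distr D0 data_space (\<lambda>(x0, y). (g_resp T \<beta> x0 \<theta>, y))"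

definition TV :: "'b measure \<Rightarrow> 'b measure \<Rightarrow> real" where
  "TV P Q = (SUP A \<in> sets P. \<bar>measure P A - measure Q A\<bar>)"

end

theory Submission imports Defs begin
lemma gm: "(\<lambda>x0. g_resp T b x0 (\<theta>::'a::euclidean_space)) \<in> borel_measurable borel"
  unfolding g_resp_def by measurable
lemma Gm: "(\<lambda>(x0, y). (g_resp T b x0 (\<theta>::'a::euclidean_space), y)) \<in> measurable data_space (data_space::('a\<times>bool) measure)"
  using gm by measurable

lemma dens_bound:
  fixes D0 :: "('a::euclidean_space \<times> bool) measure"
  assumes P: "prob_space D0" and S: "sets D0 = sets data_space"
    and dist: "distributed (distr D0 borel fst) lborel (\<lambda>x. x \<bullet> \<theta>) f"
    and fb: "\<forall>t. f t \<le> ennreal \<phi>u" and ab: "a \<le> b"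
  shows "\<phi>u \<ge> 0 \<and> measure D0 {\<omega>\<in>space D0. fst \<omega> \<bullet> \<theta> \<in> {a..<b}} \<le> \<phi>u * (b - a)"
proof -
  interpret prob_space D0 by fact
  have fm: "fst \<in> measurable D0 borel"
    using measurable_cong_sets[OF S refl] by (metis measurable_fst)
  let ?D = "distr D0 borel fst"
  have dm: "(\<lambda>x::'a. x \<bullet> \<theta>) \<in> borel_measurable borel" by measurable
  have eq: "distr ?D lborel (\<lambda>x. x \<bullet> \<theta>) = density lborel f"
    using distributed_distr_eq_density[OF dist] .
  have fmeas: "f \<in> borel_measurable lborel" using distributed_borel_measurable[OF dist] .
  have bnd: "\<And>A. A \<in> sets lborel \<Longrightarrow> emeasure (density lborel f) A \<le> ennreal \<phi>u * emeasure lborel A"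
  proof -
    fix A :: "real set" assume A: "A \<in> sets lborel"
    have "emeasure (density lborel f) A = (\<integral>\<^sup>+x. f x * indicator A x \<partial>lborel)"
      using emeasure_density[OF fmeas A] .
    also have "\<dots> \<le> (\<integral>\<^sup>+x. ennreal \<phi>u * indicator A x \<partial>lborel)"
      by (intro nn_integral_mono) (auto simp: fb mult_right_mono)
    also have "\<dots> = ennreal \<phi>u * emeasure lborel A"
      using A by (simp add: nn_integral_cmult_indicator)
    finally show "emeasure (density lborel f) A \<le> ennreal \<phi>u * emeasure lborel A" .
  qed
  have dm2: "(\<lambda>x::'a. x \<bullet> \<theta>) \<in> measurable ?D lborel"
    using dm by (simp add: measurable_distr_eq1)
  have tot: "emeasure (density lborel f) UNIV = 1"
  proof -
    have "emeasure (density lborel f) UNIV = emeasure (distr ?D lborel (\<lambda>x. x \<bullet> \<theta>)) UNIV"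
      by (simp add: eq)
    also have "\<dots> = emeasure ?D ((\<lambda>x. x \<bullet> \<theta>) -` UNIV \<inter> space ?D)"
      by (rule emeasure_distr[OF dm2]) simp
    also have "\<dots> = emeasure D0 (fst -` UNIV \<inter> space D0)"
      by (simp add: emeasure_distr fm)
    also have "\<dots> = 1" by (simp add: emeasure_space_1)
    finally show ?thesis .
  qed
  have nn: "\<phi>u \<ge> 0"
  proof (rule ccontr)
    assume "\<not> ?thesis"
    then have "ennreal \<phi>u = 0" by (simp add: ennreal_eq_0_iff)
    with bnd[of UNIV] tot show False by simp
  qed
  have "emeasure D0 {\<omega>\<in>space D0. fst \<omega> \<bullet> \<theta> \<in> {a..<b}} = emeasure D0 (fst -` {x. x \<bullet> \<theta> \<in> {a..<b}} \<inter> space D0)"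
    by (intro arg_cong[where f="emeasure D0"]) auto
  also have "\<dots> = emeasure ?D {x. x \<bullet> \<theta> \<in> {a..<b}}"
    by (rule emeasure_distr[symmetric, OF fm]) measurable
  also have "\<dots> = emeasure ?D ((\<lambda>x. x \<bullet> \<theta>) -` {a..<b} \<inter> space ?D)"
    by (intro arg_cong[where f="emeasure ?D"]) auto
  also have "\<dots> = emeasure (distr ?D lborel (\<lambda>x. x \<bullet> \<theta>)) {a..<b}"
    by (rule emeasure_distr[symmetric, OF dm2]) simp
  also have "\<dots> \<le> ennreal \<phi>u * ennreal (b - a)"
    using bnd[of "{a..<b}"] ab eq by simp
  also have "\<dots> = ennreal (\<phi>u * (b - a))" using nn ab by (simp add: ennreal_mult)
  finally have "emeasure D0 {\<omega>\<in>space D0. fst \<omega> \<bullet> \<theta> \<in> {a..<b}} \<le> ennreal (\<phi>u * (b - a))" .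
  then have "measure D0 {\<omega>\<in>space D0. fst \<omega> \<bullet> \<theta> \<in> {a..<b}} \<le> \<phi>u * (b - a)"
    using nn ab by (simp add: measure_def enn2real_leI)
  with nn show ?thesis by simp
qed

lemma diff_bound:
  fixes D0 :: "('a::euclidean_space \<times> bool) measure"
  assumes P: "prob_space D0" and S: "sets D0 = sets data_space"
    and E: "\<And>\<omega>. \<omega> \<in> space D0 \<Longrightarrow> \<omega> \<notin> Ev \<Longrightarrow> G1 \<omega> = G2 \<omega>"
    and Em: "Ev \<in> sets D0"
    and G1: "G1 \<in> measurable data_space data_space" and G2: "G2 \<in> measurable data_space data_space"
    and A: "A \<in> sets data_space"
  shows "measure D0 (G1 -` A \<inter> space D0) \<le> measure D0 (G2 -` A \<inter> space D0) + measure D0 Ev"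
proof -
  interpret prob_space D0 by fact
  have G1': "G1 \<in> measurable D0 data_space" by (subst measurable_cong_sets[OF S refl]) (rule G1)
  have G2': "G2 \<in> measurable D0 data_space" by (subst measurable_cong_sets[OF S refl]) (rule G2)
  have s1: "G1 -` A \<inter> space D0 \<in> sets D0" using G1' A by (rule measurable_sets)
  have s2: "G2 -` A \<inter> space D0 \<in> sets D0" using G2' A by (rule measurable_sets)
  have "G1 -` A \<inter> space D0 \<subseteq> (G2 -` A \<inter> space D0) \<union> Ev" using E by auto
  then have "measure D0 (G1 -` A \<inter> space D0) \<le> measure D0 ((G2 -` A \<inter> space D0) \<union> Ev)"
    using s2 Em by (intro finite_measure_mono) auto
  also have "\<dots> \<le> measure D0 (G2 -` A \<inter> space D0) + measure D0 Ev"
    using s2 Em by (rule measure_Un_le)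
  finally show ?thesis .
qed

theorem claim3:
  fixes D0 :: "('a::euclidean_space \<times> bool) measure"
    and \<Theta> :: "'a set" and T \<phi>u :: real
  assumes "prob_space D0"
    and "sets D0 = sets data_space"
    and "\<forall>\<theta>\<in>\<Theta>. norm \<theta> = 1"
    and "\<forall>\<theta>\<in>\<Theta>. \<exists>f. distributed (distr D0 borel fst) lborel (\<lambda>x. x \<bullet> \<theta>) f
                         \<and> (\<forall>t. f t \<le> ennreal \<phi>u)"
  shows "\<forall>\<beta> \<beta>' \<theta>. \<beta> > 0 \<longrightarrow> \<beta>' > 0 \<longrightarrow> \<theta> \<in> \<Theta> \<longrightarrow>
           TV (D_induced T \<beta> D0 \<theta>) (D_induced T \<beta>' D0 \<theta>) \<le> \<phi>u * \<bar>\<beta> - \<beta>'\<bar>"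
proof (intro allI impI)
  fix \<beta> \<beta>' :: real and \<theta> assume "\<beta> > 0" "\<beta>' > 0" and th: "\<theta> \<in> \<Theta>"
  interpret prob_space D0 by fact
  obtain f where dist: "distributed (distr D0 borel fst) lborel (\<lambda>x. x \<bullet> \<theta>) f"
    and fb: "\<forall>t. f t \<le> ennreal \<phi>u" using assms(4) th by blast
  define a where "a = T - max \<beta> \<beta>'"
  define b where "b = T - min \<beta> \<beta>'"
  have ab: "a \<le> b" and ba: "b - a = \<bar>\<beta> - \<beta>'\<bar>" unfolding a_def b_def by auto
  define Ev where "Ev = {\<omega>\<in>space D0. fst \<omega> \<bullet> \<theta> \<in> {a..<b}}"
  have fm: "fst \<in> measurable D0 borel"
    using measurable_cong_sets[OF assms(2) refl] by (metis measurable_fst)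
  have Em: "Ev \<in> sets D0" unfolding Ev_def using fm by measurable
  have db: "\<phi>u \<ge> 0 \<and> measure D0 Ev \<le> \<phi>u * (b - a)"
    unfolding Ev_def by (rule dens_bound[OF assms(1,2) dist fb ab])
  let ?G = "\<lambda>c. (\<lambda>(x0, y). (g_resp T c x0 \<theta>, y))"
  have Eq: "\<And>\<omega>. \<omega> \<in> space D0 \<Longrightarrow> \<omega> \<notin> Ev \<Longrightarrow> ?G \<beta> \<omega> = ?G \<beta>' \<omega>"
    unfolding Ev_def a_def b_def g_resp_def by (auto split: prod.splits)
  have Eq2: "\<And>\<omega>. \<omega> \<in> space D0 \<Longrightarrow> \<omega> \<notin> Ev \<Longrightarrow> ?G \<beta>' \<omega> = ?G \<beta> \<omega>"
    using Eq by metis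
  have key: "\<bar>measure (D_induced T \<beta> D0 \<theta>) A - measure (D_induced T \<beta>' D0 \<theta>) A\<bar> \<le> \<phi>u * \<bar>\<beta> - \<beta>'\<bar>"
    if A: "A \<in> sets (D_induced T \<beta> D0 \<theta>)" for A
  proof -
    have A': "A \<in> sets data_space" using A by (simp add: D_induced_def)
    have G1': "?G \<beta> \<in> measurable D0 data_space" by (subst measurable_cong_sets[OF assms(2) refl]) (rule Gm)
    have G2': "?G \<beta>' \<in> measurable D0 data_space" by (subst measurable_cong_sets[OF assms(2) refl]) (rule Gm)
    have m1: "measure (D_induced T \<beta> D0 \<theta>) A = measure D0 (?G \<beta> -` A \<inter> space D0)"
      unfolding D_induced_def by (rule measure_distr[OF G1' A'])
    have m2: "measure (D_induced T \<beta>' D0 \<theta>) A = measure D0 (?G \<beta>' -` A \<inter> space D0)"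
      unfolding D_induced_def by (rule measure_distr[OF G2' A'])
    have i1: "measure D0 (?G \<beta> -` A \<inter> space D0) \<le> measure D0 (?G \<beta>' -` A \<inter> space D0) + measure D0 Ev"
      by (rule diff_bound[OF assms(1,2) Eq Em Gm Gm A'])
    have i2: "measure D0 (?G \<beta>' -` A \<inter> space D0) \<le> measure D0 (?G \<beta> -` A \<inter> space D0) + measure D0 Ev"
      by (rule diff_bound[OF assms(1,2) Eq2 Em Gm Gm A'])
    show ?thesis using i1 i2 db ba m1 m2 by (simp add: abs_le_iff)
  qed
  show "TV (D_induced T \<beta> D0 \<theta>) (D_induced T \<beta>' D0 \<theta>) \<le> \<phi>u * \<bar>\<beta> - \<beta>'\<bar>"
    unfolding TV_def by (rule cSUP_least) (use key in auto)
qed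

end
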